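(* Let $d\in\mathbb{N}$, and for $a=(a_0,\dots,a_d)\in\mathbb{R}^{d+1}$ and $s\in\mathbb{R}$ let $g(a,s)=a_0+a_1s+\cdots+a_ds^d$. For $m,R>0$ set $K=\{a\in\mathbb{R}^{d+1}: |a_0|+\cdots+|a_d|\geq m\}$ and $I=[-R,R]$. Then there exists $\lambda=\lambda(d,m,R)>0$ such that for each $a\in K$, either there exists $p\in\{1,\dots,d\}$ with $\left|\frac{\partial^p g}{\partial s^p}(a,s)\right|\geq\lambda$ for all $s\in I$, or $|a_0|-\sup_{s\in I}|g(a,s)-a_0|\geq\lambda$. *)

theory Defs
  imports "HOL-Analysis.Analysis"
begin

text \<open>The polynomial g(a,s) = a_0 + a_1 s + ... + a_d s^d; the coefficient vector
  a in R^(d+1) is represented by a function nat => real of which only the values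
  at 0..d are used.\<close>
definition gpoly :: "nat \<Rightarrow> (nat \<Rightarrow> real) \<Rightarrow> real \<Rightarrow> real" where
  "gpoly d a s = (\<Sum>i\<le>d. a i * s ^ i)"

end

theory Submission
  imports Defs
begin
definition hc :: "nat \<Rightarrow> nat \<Rightarrow> real" where
  "hc p i = (if p \<le> i then fact i / fact (i - p) else 0)"

lemma hc_step: "hc p i * of_nat (i - p) = hc (Suc p) i"
proof (cases "p < i")
  case True
  then have "fact (i - p) = (of_nat (i - p) :: real) * fact (i - Suc p)"
    by (metis Suc_diff_Suc fact_Suc of_nat_Suc diff_Suc_Suc of_nat_fact)
  moreover have "(of_nat (i - p) :: real) \<noteq> 0" using True by simp
  ultimately show ?thesis using True unfolding hc_def by (simp del: of_nat_diff)
next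
  case False
  then show ?thesis by (auto simp: hc_def)
qed

lemma deriv_iter: "(deriv ^^ p) (gpoly d a) = (\<lambda>s. \<Sum>i\<le>d. a i * hc p i * s^(i-p))"
proof (induction p)
  case 0
  then show ?case by (simp add: gpoly_def hc_def fun_eq_iff)
next
  case (Suc p)
  show ?case
  proof
    fix s :: real
    have "((\<lambda>s. \<Sum>i\<le>d. a i * hc p i * s^(i-p)) has_real_derivative
           (\<Sum>i\<le>d. a i * hc p i * (of_nat (i-p) * s^(i-p-1)))) (at s)"
      by (auto intro!: derivative_eq_intros sum.cong simp: mult_ac)
    moreover have "(\<Sum>i\<le>d. a i * hc p i * (of_nat (i-p) * s^(i-p-1))) = (\<Sum>i\<le>d. a i * hc (Suc p) i * s^(i-Suc p))"
      by (rule sum.cong) (auto simp flip: hc_step)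
    ultimately have "((\<lambda>s. \<Sum>i\<le>d. a i * hc p i * s^(i-p)) has_real_derivative
           (\<Sum>i\<le>d. a i * hc (Suc p) i * s^(i-Suc p))) (at s)" by simp
    then show "(deriv ^^ Suc p) (gpoly d a) s = (\<Sum>i\<le>d. a i * hc (Suc p) i * s^(i-Suc p))"
      using Suc by (simp add: DERIV_imp_deriv)
  qed
qed

lemma hc_le: "i \<le> d \<Longrightarrow> 0 \<le> hc p i \<and> hc p i \<le> fact d"
proof -
  assume "i \<le> d"
  have "fact i / fact (i - p) \<le> (fact i :: real)"
    by (simp add: divide_le_eq fact_ge_1 mult_le_cancel_left1)
  moreover have "(fact i :: real) \<le> fact d" using \<open>i \<le> d\<close> by (simp add: fact_mono)
  ultimately show ?thesis by (auto simp: hc_def)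
qed

lemma pow_le_B:
  fixes s R :: real
  assumes "\<bar>s\<bar> \<le> R" "j \<le> d"
  shows "\<bar>s\<bar> ^ j \<le> max 1 R ^ d"
proof -
  have "\<bar>s\<bar> ^ j \<le> max 1 R ^ j" using assms by (intro power_mono) auto
  also have "\<dots> \<le> max 1 R ^ d" using assms by (intro power_increasing) auto
  finally show ?thesis .
qed

lemma dbound:
  assumes "\<bar>s\<bar> \<le> R" "k \<le> d"
  shows "\<bar>(deriv ^^ k) (gpoly d a) s\<bar> \<ge> fact k * \<bar>a k\<bar> - (\<Sum>j\<in>{Suc k..d}. \<bar>a j\<bar>) * (fact d * max 1 R ^ d)"
proof -
  let ?f = "\<lambda>i. a i * hc k i * s^(i-k)"
  have "(deriv ^^ k) (gpoly d a) s = (\<Sum>i\<le>d. ?f i)" by (simp add: deriv_iter)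
  also have "\<dots> = (\<Sum>i\<in>{k..d}. ?f i)"
    by (rule sum.mono_neutral_right) (auto simp: hc_def)
  also have "\<dots> = ?f k + (\<Sum>i\<in>{Suc k..d}. ?f i)"
    using assms by (simp add: sum.atLeast_Suc_atMost)
  finally have e: "(deriv ^^ k) (gpoly d a) s = fact k * a k + (\<Sum>i\<in>{Suc k..d}. ?f i)"
    by (simp add: hc_def)
  have "\<bar>\<Sum>i\<in>{Suc k..d}. ?f i\<bar> \<le> (\<Sum>i\<in>{Suc k..d}. \<bar>?f i\<bar>)" by (rule sum_abs)
  also have "\<dots> \<le> (\<Sum>j\<in>{Suc k..d}. \<bar>a j\<bar> * (fact d * max 1 R ^ d))"
  proof (rule sum_mono)
    fix i assume i: "i \<in> {Suc k..d}"
    have h: "0 \<le> hc k i" "hc k i \<le> fact d" using hc_le[of i d k] i by auto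
    have p: "\<bar>s\<bar> ^ (i-k) \<le> max 1 R ^ d" using pow_le_B[OF assms(1), of "i-k" d] i by auto
    have "\<bar>?f i\<bar> = \<bar>a i\<bar> * (hc k i * \<bar>s\<bar> ^ (i-k))" using h by (simp add: abs_mult power_abs)
    also have "\<dots> \<le> \<bar>a i\<bar> * (fact d * max 1 R ^ d)"
      by (intro mult_left_mono mult_mono h p) auto
    finally show "\<bar>?f i\<bar> \<le> \<bar>a i\<bar> * (fact d * max 1 R ^ d)" .
  qed
  finally have r: "\<bar>\<Sum>i\<in>{Suc k..d}. ?f i\<bar> \<le> (\<Sum>j\<in>{Suc k..d}. \<bar>a j\<bar>) * (fact d * max 1 R ^ d)"
    by (simp add: sum_distrib_right)
  have "\<bar>fact k * a k\<bar> = fact k * \<bar>a k\<bar>" by (simp add: abs_mult)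
  then show ?thesis using e r by linarith
qed

lemma gbound:
  assumes "\<bar>s\<bar> \<le> R"
  shows "\<bar>gpoly d a s - a 0\<bar> \<le> (\<Sum>j\<in>{1..d}. \<bar>a j\<bar>) * (fact d * max 1 R ^ d)"
proof -
  have "gpoly d a s = (\<Sum>i\<in>{0..d}. a i * s ^ i)" by (simp add: gpoly_def atLeast0AtMost)
  also have "\<dots> = a 0 + (\<Sum>i\<in>{1..d}. a i * s ^ i)" by (simp add: sum.atLeast_Suc_atMost)
  finally have e: "gpoly d a s - a 0 = (\<Sum>i\<in>{1..d}. a i * s ^ i)" by simp
  have "\<bar>\<Sum>i\<in>{1..d}. a i * s ^ i\<bar> \<le> (\<Sum>i\<in>{1..d}. \<bar>a i * s ^ i\<bar>)" by (rule sum_abs)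
  also have "\<dots> \<le> (\<Sum>j\<in>{1..d}. \<bar>a j\<bar> * (fact d * max 1 R ^ d))"
  proof (rule sum_mono)
    fix i assume i: "i \<in> {1..d}"
    have p: "\<bar>s\<bar> ^ i \<le> max 1 R ^ d" using pow_le_B[OF assms(1), of i d] i by auto
    have "(1::real) \<le> fact d" by (rule fact_ge_1)
    then have q: "max 1 R ^ d \<le> fact d * max 1 R ^ d"
      using mult_right_mono[of 1 "fact d" "max 1 R ^ d"] by simp
    have "\<bar>s\<bar> ^ i \<le> fact d * max 1 R ^ d" using p q by linarith
    then show "\<bar>a i * s ^ i\<bar> \<le> \<bar>a i\<bar> * (fact d * max 1 R ^ d)"
      by (simp add: abs_mult power_abs mult_left_mono)
  qed
  finally show ?thesis using e by (simp add: sum_distrib_right)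
qed

theorem lemma2:
  fixes d :: nat and m R :: real
  assumes "m > 0" and "R > 0"
  shows "\<exists>lam>0. \<forall>a :: nat \<Rightarrow> real. (\<Sum>i\<le>d. \<bar>a i\<bar>) \<ge> m \<longrightarrow>
           ((\<exists>p\<in>{1..d}. \<forall>s\<in>{-R..R}. \<bar>(deriv ^^ p) (gpoly d a) s\<bar> \<ge> lam)
            \<or> \<bar>a 0\<bar> - (SUP s\<in>{-R..R}. \<bar>gpoly d a s - a 0\<bar>) \<ge> lam)"
proof -
  define B where "B = fact d * max 1 R ^ d"
  have B1: "B \<ge> 1"
  proof -
    have "(1::real) \<le> fact d" by (rule fact_ge_1)
    moreover have "(1::real) \<le> max 1 R ^ d" by (simp add: one_le_power)
    ultimately show ?thesis unfolding B_def using mult_mono[of 1 "fact d" 1 "max 1 R ^ d"] by simp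
  qed
  define \<delta> where "\<delta> = 1 / (4 * (real d + 1) * B)"
  have \<delta>pos: "\<delta> > 0" using B1 by (simp add: \<delta>_def)
  have dB: "real d * B * \<delta> \<le> 1/4"
  proof -
    have "real d * B * \<delta> = real d / (4 * (real d + 1))" using B1 by (simp add: \<delta>_def)
    also have "\<dots> \<le> 1/4" by (simp add: field_simps)
    finally show ?thesis .
  qed
  have \<delta>1: "\<delta> \<le> 1"
  proof -
    have "4 * (real d + 1) * B \<ge> 1" using B1
      by (smt (verit) mult_le_cancel_right1 of_nat_0_le_iff)
    then show ?thesis by (simp add: \<delta>_def)
  qed
  define lam where "lam = m * \<delta> ^ d / 2"
  have lampos: "lam > 0" using assms \<delta>pos by (simp add: lam_def)
  show ?thesis
  proof (intro exI[of _ lam] conjI allI impI lampos)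
    fix a :: "nat \<Rightarrow> real"
    assume am: "(\<Sum>i\<le>d. \<bar>a i\<bar>) \<ge> m"
    define S where "S = {k\<in>{1..d}. \<bar>a k\<bar> \<ge> m * \<delta> ^ k}"
    show "(\<exists>p\<in>{1..d}. \<forall>s\<in>{-R..R}. \<bar>(deriv ^^ p) (gpoly d a) s\<bar> \<ge> lam)
            \<or> \<bar>a 0\<bar> - (SUP s\<in>{-R..R}. \<bar>gpoly d a s - a 0\<bar>) \<ge> lam"
    proof (cases "S = {}")
      case False
      define k where "k = Max S"
      have fS: "finite S" by (simp add: S_def)
      have kS: "k \<in> S" using False fS by (simp add: k_def)
      then have k1: "k \<in> {1..d}" and ak: "\<bar>a k\<bar> \<ge> m * \<delta> ^ k" by (auto simp: S_def)
      have big: "\<bar>a j\<bar> \<le> m * \<delta> ^ Suc k" if j: "j \<in> {Suc k..d}" for j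
      proof -
        have "j \<notin> S" using j fS k_def by (metis Max_ge atLeastAtMost_iff not_less_eq_eq)
        then have "\<bar>a j\<bar> < m * \<delta> ^ j" using j k1 by (auto simp: S_def)
        also have "\<dots> \<le> m * \<delta> ^ Suc k" using j \<delta>pos \<delta>1 assms
          by (intro mult_left_mono power_decreasing) auto
        finally show ?thesis by simp
      qed
      have sumle: "(\<Sum>j\<in>{Suc k..d}. \<bar>a j\<bar>) \<le> real d * (m * \<delta> ^ Suc k)"
      proof -
        have "(\<Sum>j\<in>{Suc k..d}. \<bar>a j\<bar>) \<le> (\<Sum>j\<in>{Suc k..d}. m * \<delta> ^ Suc k)"
          by (rule sum_mono) (rule big)
        also have "\<dots> = real (d - k) * (m * \<delta> ^ Suc k)" by simp
        also have "\<dots> \<le> real d * (m * \<delta> ^ Suc k)" using assms \<delta>pos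
          by (intro mult_right_mono) auto
        finally show ?thesis .
      qed
      have "\<forall>s\<in>{-R..R}. \<bar>(deriv ^^ k) (gpoly d a) s\<bar> \<ge> lam"
      proof
        fix s assume s: "s \<in> {-R..R}"
        have sR: "\<bar>s\<bar> \<le> R" using s by auto
        have fk: "fact k * \<bar>a k\<bar> \<ge> m * \<delta> ^ k"
          using ak mult_mono[of 1 "fact k" "m * \<delta> ^ k" "\<bar>a k\<bar>"] assms \<delta>pos
          by (simp add: fact_ge_1)
        have t: "(\<Sum>j\<in>{Suc k..d}. \<bar>a j\<bar>) * B \<le> (m * \<delta> ^ k) * (real d * B * \<delta>)"
          using mult_right_mono[OF sumle, of B] B1 by (simp add: algebra_simps)
        have t2: "(m * \<delta> ^ k) * (real d * B * \<delta>) \<le> (m * \<delta> ^ k) * (1/4)"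
          using dB assms \<delta>pos by (intro mult_left_mono) auto
        have t3: "m * \<delta> ^ d \<le> m * \<delta> ^ k"
          using k1 \<delta>pos \<delta>1 assms by (intro mult_left_mono power_decreasing) auto
        have "\<bar>(deriv ^^ k) (gpoly d a) s\<bar> \<ge> fact k * \<bar>a k\<bar> - (\<Sum>j\<in>{Suc k..d}. \<bar>a j\<bar>) * B"
          using dbound[OF sR, of k d a] k1 by (simp add: B_def)
        then show "\<bar>(deriv ^^ k) (gpoly d a) s\<bar> \<ge> lam"
          using fk t t2 t3 unfolding lam_def by linarith
      qed
      then show ?thesis using k1 by blast
    next
      case True
      have small: "\<bar>a j\<bar> \<le> m * \<delta>" if j: "j \<in> {1..d}" for j
      proof -
        have "\<bar>a j\<bar> < m * \<delta> ^ j" using True j by (auto simp: S_def)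
        also have "\<dots> \<le> m * \<delta> ^ 1" using j \<delta>pos \<delta>1 assms
          by (intro mult_left_mono power_decreasing) auto
        finally show ?thesis by simp
      qed
      define T where "T = (\<Sum>j\<in>{1..d}. \<bar>a j\<bar>)"
      have T: "T \<le> real d * (m * \<delta>)"
      proof -
        have "T \<le> (\<Sum>j\<in>{1..d}. m * \<delta>)" unfolding T_def by (rule sum_mono) (rule small)
        then show ?thesis by simp
      qed
      have T0: "T \<ge> 0" unfolding T_def by (simp add: sum_nonneg)
      have "(\<Sum>i\<le>d. \<bar>a i\<bar>) = (\<Sum>i\<in>{0..d}. \<bar>a i\<bar>)" by (simp add: atLeast0AtMost)
      also have "\<dots> = \<bar>a 0\<bar> + T" unfolding T_def by (simp add: sum.atLeast_Suc_atMost)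
      finally have a0: "\<bar>a 0\<bar> \<ge> m - T" using am by simp
      have sup: "(SUP s\<in>{-R..R}. \<bar>gpoly d a s - a 0\<bar>) \<le> T * B"
        using assms gbound[of _ R d a] by (intro cSUP_least) (auto simp: T_def B_def)
      have TB: "T * B \<le> m * (real d * B * \<delta>)"
        using mult_right_mono[OF T, of B] B1 by (simp add: algebra_simps)
      have TB2: "m * (real d * B * \<delta>) \<le> m * (1/4)" using dB assms by (intro mult_left_mono) auto
      have TTB: "T \<le> T * B" using T0 B1 mult_left_mono[of 1 B T] by simp
      have "\<delta> ^ d \<le> 1" using \<delta>pos \<delta>1 by (simp add: power_le_one)
      then have "lam \<le> m / 2" unfolding lam_def using assms
        using mult_left_mono[of "\<delta> ^ d" 1 m] by simp
      then have "\<bar>a 0\<bar> - (SUP s\<in>{-R..R}. \<bar>gpoly d a s - a 0\<bar>) \<ge> lam"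
        using a0 sup TB TB2 TTB by linarith
      then show ?thesis by blast
    qed
  qed
qed
end
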